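(* Let $x_i(t)\ge 0$ ($i,t\in[n]$) satisfy $\sum_{i\in[n]}x_i(t)\le 1$ for all $t\in[n]$, and let $\alpha_i$ be the arrival times produced by Discrete-Time Poisson Rounding from $x$. For any positive integer thresholds $(\theta_i)_{i\in[n]}$, $$\Pr\big[\forall i\in[n],\ \alpha_i>2\theta_i\big]\le\exp\Big(-2\sum_{i\in[n]}\sum_{\tau\in[\theta_i]}\bar x_i(\tau)\Big).$$
   Context: Here $[m]=\{1,\dots,m\}$ and $\bar x_i(t)=\frac1t\sum_{t'=1}^{\min\{t,n\}}x_i(t')$ for positive integers $t$ (so $\sum_i\bar x_i(t)\le 1$). Discrete-Time Poisson Rounding: independently at each step $\tau=1,2,\dots$, sample exactly one box $i\in[n]$ with probability $\bar x_i(\lceil\tau/2\rceil)$, or no box with the remaining probability $1-\sum_i\bar x_i(\lceil\tau/2\rceil)$. The arrival time $\alpha_i$ of box $i$ is the first step at which it is sampled ($\infty$ if never). *)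

theory Defs
  imports "HOL-Probability.Probability"
begin

text \<open>Boxes are indexed by 1..n, times t by 1..n. x i t is the LP value.\<close>

definition xbar :: "nat \<Rightarrow> (nat \<Rightarrow> nat \<Rightarrow> real) \<Rightarrow> nat \<Rightarrow> nat \<Rightarrow> real" where
  "xbar n x i t = (1 / real t) * (\<Sum>t'\<in>{1..min t n}. x i t')"

text \<open>Distribution of the outcome of step tau: Some i = box i sampled, None = no box.
  Probability of box i is xbar_i(ceil(tau/2)), where ceil(tau/2) = (tau+1) div 2.
  (Step 0 is unused; the arrival times only look at steps tau >= 1.)\<close>

definition step_pmf :: "nat \<Rightarrow> (nat \<Rightarrow> nat \<Rightarrow> real) \<Rightarrow> nat \<Rightarrow> nat option pmf" where
  "step_pmf n x \<tau> = embed_pmf (\<lambda>s. case s of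
       Some i \<Rightarrow> (if i \<in> {1..n} then xbar n x i ((\<tau> + 1) div 2) else 0)
     | None \<Rightarrow> 1 - (\<Sum>i\<in>{1..n}. xbar n x i ((\<tau> + 1) div 2)))"

definition dtpr :: "nat \<Rightarrow> (nat \<Rightarrow> nat \<Rightarrow> real) \<Rightarrow> (nat \<Rightarrow> nat option) measure" where
  "dtpr n x = (\<Pi>\<^sub>M \<tau>\<in>UNIV. measure_pmf (step_pmf n x \<tau>))"

definition arrival :: "(nat \<Rightarrow> nat option) \<Rightarrow> nat \<Rightarrow> enat" where
  "arrival \<omega> i = (if \<exists>\<tau>\<ge>1. \<omega> \<tau> = Some i
                   then enat (LEAST \<tau>. \<tau> \<ge> 1 \<and> \<omega> \<tau> = Some i) else \<infinity>)"

end

theory Submission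
  imports Defs
begin

lemma xbar_nonneg:
  assumes nonneg: "\<And>i t. i \<in> {1..n} \<Longrightarrow> t \<in> {1..n} \<Longrightarrow> x i t \<ge> 0"
    and i: "i \<in> {1..n}"
  shows "xbar n x i c \<ge> 0"
  unfolding xbar_def using nonneg[OF i] by (intro mult_nonneg_nonneg sum_nonneg) auto

lemma xbar_sum_le:
  assumes sum_le: "\<And>t. t \<in> {1..n} \<Longrightarrow> (\<Sum>i\<in>{1..n}. x i t) \<le> 1"
  shows "(\<Sum>i\<in>{1..n}. xbar n x i c) \<le> 1"
proof (cases "c = 0")
  case True thus ?thesis by (simp add: xbar_def)
next
  case False
  have "(\<Sum>i\<in>{1..n}. xbar n x i c) = (1 / real c) * (\<Sum>t'\<in>{1..min c n}. \<Sum>i\<in>{1..n}. x i t')"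
    unfolding xbar_def sum_distrib_left[symmetric] by (subst sum.swap) (rule refl)
  also have "(\<Sum>t'\<in>{1..min c n}. \<Sum>i\<in>{1..n}. x i t') \<le> (\<Sum>t'\<in>{1..min c n}. 1)"
    by (rule sum_mono) (use sum_le in auto)
  also have "\<dots> \<le> real c" by simp
  finally show ?thesis using False by (simp add: divide_simps)
qed

lemma pmf_step:
  assumes nonneg: "\<And>i t. i \<in> {1..n} \<Longrightarrow> t \<in> {1..n} \<Longrightarrow> x i t \<ge> 0"
    and sum_le: "\<And>t. t \<in> {1..n} \<Longrightarrow> (\<Sum>i\<in>{1..n}. x i t) \<le> 1"
  shows "pmf (step_pmf n x \<tau>) (Some i) = (if i \<in> {1..n} then xbar n x i ((\<tau> + 1) div 2) else 0)"
proof -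
  define c where "c = (\<tau> + 1) div 2"
  define f where "f = (\<lambda>s. case s of
       Some i \<Rightarrow> (if i \<in> {1..n} then xbar n x i c else 0)
     | None \<Rightarrow> 1 - (\<Sum>i\<in>{1..n}. xbar n x i c))"
  have fnn: "0 \<le> f s" for s
    using xbar_nonneg[OF nonneg] xbar_sum_le[OF sum_le, where c=c]
    by (auto simp: f_def split: option.splits)
  have "(\<integral>\<^sup>+s. ennreal (f s) \<partial>count_space UNIV) = (\<Sum>s\<in>insert None (Some ` {1..n}). ennreal (f s))"
    by (rule nn_integral_count_space') (auto simp: f_def split: option.splits)
  also have "\<dots> = ennreal (\<Sum>s\<in>insert None (Some ` {1..n}). f s)"
    using fnn by (simp add: sum_ennreal)
  also have "(\<Sum>s\<in>insert None (Some ` {1..n}). f s) = f None + (\<Sum>i\<in>{1..n}. f (Some i))"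
    by (subst sum.insert) (auto simp: sum.reindex)
  also have "\<dots> = 1" by (simp add: f_def)
  finally have "(\<integral>\<^sup>+s. ennreal (f s) \<partial>count_space UNIV) = 1" by simp
  then have "pmf (embed_pmf f) (Some i) = f (Some i)"
    using fnn by (intro pmf_embed_pmf) auto
  then show ?thesis unfolding step_pmf_def f_def c_def by simp
qed

lemma arrival_gt:
  "arrival \<omega> i > enat k \<longleftrightarrow> (\<forall>\<tau>. 1 \<le> \<tau> \<and> \<tau> \<le> k \<longrightarrow> \<omega> \<tau> \<noteq> Some i)"
proof (cases "\<exists>\<tau>\<ge>1. \<omega> \<tau> = Some i")
  case True
  define L where "L = (LEAST \<tau>. \<tau> \<ge> 1 \<and> \<omega> \<tau> = Some i)"
  have L: "L \<ge> 1 \<and> \<omega> L = Some i" using True unfolding L_def by (metis (mono_tags, lifting) LeastI)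
  have Lmin: "\<And>\<tau>. \<tau> \<ge> 1 \<and> \<omega> \<tau> = Some i \<Longrightarrow> L \<le> \<tau>" unfolding L_def by (rule Least_le)
  have "arrival \<omega> i = enat L" using True unfolding arrival_def L_def by simp
  then show ?thesis using L Lmin by (auto, meson dual_order.trans not_less)
next
  case False
  then show ?thesis unfolding arrival_def by auto
qed

lemma sum_half:
  fixes k :: nat and f :: "nat \<Rightarrow> real"
  shows "(\<Sum>\<tau>\<in>{1..2*k}. f ((\<tau> + 1) div 2)) = 2 * (\<Sum>t\<in>{1..k}. (f t :: real))"
proof (induction k)
  case 0 then show ?case by simp
next
  case (Suc k)
  have "{1..2 * Suc k} = insert (2*k+2) (insert (2*k+1) {1..2*k})" by auto
  then show ?case using Suc by (simp add: sum.insert)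
qed

theorem lemma3p5:
  fixes n :: nat and x :: "nat \<Rightarrow> nat \<Rightarrow> real" and \<theta> :: "nat \<Rightarrow> nat"
  assumes nonneg: "\<And>i t. i \<in> {1..n} \<Longrightarrow> t \<in> {1..n} \<Longrightarrow> x i t \<ge> 0"
    and sum_le: "\<And>t. t \<in> {1..n} \<Longrightarrow> (\<Sum>i\<in>{1..n}. x i t) \<le> 1"
    and theta_pos: "\<And>i. i \<in> {1..n} \<Longrightarrow> \<theta> i \<ge> 1"
  shows "measure (dtpr n x)
           {\<omega> \<in> space (dtpr n x). \<forall>i\<in>{1..n}. arrival \<omega> i > enat (2 * \<theta> i)}
         \<le> exp (- 2 * (\<Sum>i\<in>{1..n}. \<Sum>\<tau>\<in>{1..\<theta> i}. xbar n x i \<tau>))"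
  proof -
  define M where "M = (\<lambda>\<tau>. measure_pmf (step_pmf n x \<tau>))"
  define T where "T = 2 * (\<Sum>i\<in>{1..n}. \<theta> i)"
  define J where "J = {1..T}"
  define S where "S = (\<lambda>\<tau>::nat. {i\<in>{1..n}. \<tau> \<le> 2 * \<theta> i})"
  define A where "A = (\<lambda>\<tau>. UNIV - Some ` S \<tau>)"
  define g where "g = (\<lambda>i \<tau>::nat. xbar n x i ((\<tau> + 1) div 2))"
  have thT: "2 * \<theta> i \<le> T" if "i \<in> {1..n}" for i
    unfolding T_def using that by (auto intro!: member_le_sum)
  have dt: "dtpr n x = PiM UNIV M" unfolding dtpr_def M_def by simp
  have probM: "prob_space (M \<tau>)" for \<tau> unfolding M_def by (rule prob_space_measure_pmf)
  have spaceM: "space (M \<tau>) = UNIV" for \<tau> unfolding M_def by simp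
  have seteq: "{\<omega> \<in> space (dtpr n x). \<forall>i\<in>{1..n}. arrival \<omega> i > enat (2 * \<theta> i)}
      = prod_emb UNIV M J (Pi\<^sub>E J A)"
  proof -
    have "(\<forall>i\<in>{1..n}. arrival \<omega> i > enat (2 * \<theta> i)) \<longleftrightarrow> (\<forall>\<tau>\<in>J. \<omega> \<tau> \<in> A \<tau>)" for \<omega>
      unfolding arrival_gt A_def S_def J_def using thT
      by (auto simp: image_iff; meson atLeastAtMost_iff dual_order.trans)
    then show ?thesis
      by (auto simp: dt prod_emb_def space_PiM spaceM PiE_iff)
  qed
  have "measure (dtpr n x) (prod_emb UNIV M J (Pi\<^sub>E J A)) = (\<Prod>\<tau>\<in>J. measure (M \<tau>) (A \<tau>))"
  proof -
    have "emeasure (dtpr n x) (prod_emb UNIV M J (Pi\<^sub>E J A)) = (\<Prod>\<tau>\<in>J. emeasure (M \<tau>) (A \<tau>))"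
      unfolding dt by (rule emeasure_PiM_emb) (auto simp: J_def M_def prob_space_measure_pmf)
    also have "\<dots> = (\<Prod>\<tau>\<in>J. ennreal (measure (M \<tau>) (A \<tau>)))"
      unfolding M_def by (simp add: measure_pmf.emeasure_eq_measure)
    also have "\<dots> = ennreal (\<Prod>\<tau>\<in>J. measure (M \<tau>) (A \<tau>))"
      by (simp add: prod_ennreal)
    finally show ?thesis unfolding measure_def by (simp add: prod_nonneg)
  qed
  also have "\<dots> \<le> (\<Prod>\<tau>\<in>J. exp (- (\<Sum>i\<in>S \<tau>. g i \<tau>)))"
  proof (rule prod_mono, rule conjI)
    fix \<tau> assume "\<tau> \<in> J"
    have fin: "finite (Some ` S \<tau>)" unfolding S_def by auto
    have "measure (M \<tau>) (A \<tau>) = 1 - measure (M \<tau>) (Some ` S \<tau>)"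
      unfolding A_def M_def using measure_pmf.prob_compl[of "Some ` S \<tau>" "step_pmf n x \<tau>"] by simp
    also have "measure (M \<tau>) (Some ` S \<tau>) = (\<Sum>i\<in>S \<tau>. pmf (step_pmf n x \<tau>) (Some i))"
      unfolding M_def using fin by (simp add: measure_measure_pmf_finite sum.reindex)
    also have "\<dots> = (\<Sum>i\<in>S \<tau>. g i \<tau>)"
      by (rule sum.cong[OF refl]) (auto simp only: S_def g_def pmf_step[OF nonneg sum_le] mem_Collect_eq if_True)
    finally have eq: "measure (M \<tau>) (A \<tau>) = 1 - (\<Sum>i\<in>S \<tau>. g i \<tau>)" .
    show "0 \<le> measure (M \<tau>) (A \<tau>)" by simp
    show "measure (M \<tau>) (A \<tau>) \<le> exp (- (\<Sum>i\<in>S \<tau>. g i \<tau>))"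
      unfolding eq using exp_ge_add_one_self[of "- (\<Sum>i\<in>S \<tau>. g i \<tau>)"] by simp
  qed
  also have "\<dots> = exp (- (\<Sum>\<tau>\<in>J. \<Sum>i\<in>S \<tau>. g i \<tau>))"
    by (subst sum_negf[symmetric], subst exp_sum) (auto simp: J_def)
  also have "(\<Sum>\<tau>\<in>J. \<Sum>i\<in>S \<tau>. g i \<tau>) = (\<Sum>i\<in>{1..n}. \<Sum>\<tau>\<in>{1..2 * \<theta> i}. g i \<tau>)"
  proof -
    have "(\<Sum>\<tau>\<in>J. \<Sum>i\<in>S \<tau>. g i \<tau>) = (\<Sum>\<tau>\<in>J. \<Sum>i\<in>{1..n}. if \<tau> \<le> 2 * \<theta> i then g i \<tau> else 0)"
      unfolding S_def by (rule sum.cong[OF refl], rule sum.inter_filter) simp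
    also have "\<dots> = (\<Sum>i\<in>{1..n}. \<Sum>\<tau>\<in>J. if \<tau> \<le> 2 * \<theta> i then g i \<tau> else 0)"
      by (rule sum.swap)
    also have "\<dots> = (\<Sum>i\<in>{1..n}. \<Sum>\<tau>\<in>{1..2 * \<theta> i}. g i \<tau>)"
    proof (rule sum.cong[OF refl])
      fix i assume i: "i \<in> {1..n}"
      have eqset: "{\<tau>\<in>J. \<tau> \<le> 2 * \<theta> i} = {1..2 * \<theta> i}" unfolding J_def using thT[OF i] by auto
      have finJ: "finite J" by (simp add: J_def)
      show "(\<Sum>\<tau>\<in>J. if \<tau> \<le> 2 * \<theta> i then g i \<tau> else 0) = (\<Sum>\<tau>\<in>{1..2 * \<theta> i}. g i \<tau>)"
        by (subst sum.inter_filter[OF finJ, symmetric]) (simp only: eqset)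
    qed
    finally show ?thesis .
  qed
  also have "\<dots> = (\<Sum>i\<in>{1..n}. 2 * (\<Sum>\<tau>\<in>{1..\<theta> i}. xbar n x i \<tau>))"
    unfolding g_def by (rule sum.cong[OF refl], rule sum_half)
  also have "\<dots> = 2 * (\<Sum>i\<in>{1..n}. \<Sum>\<tau>\<in>{1..\<theta> i}. xbar n x i \<tau>)"
    by (simp add: sum_distrib_left)
  finally show ?thesis using seteq by simp
qed

end
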